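(* Let $a>0$, $k\ne0$, $\alpha=\arctan k$, and let $S_{a,k}=\{(r\cos\varphi,r\sin\varphi)\in\mathbb{R}^2: r=ae^{k\varphi},\ \varphi\in\mathbb{R}\}$ be the logarithmic spiral. Then $\mathrm{Ent}[S_{a,k}]\le 1/|\sin\alpha|<\infty$.
   Context: For a curve $\Gamma$, $F_{x_0,\lambda}[\Gamma]=\frac{1}{\sqrt{4\pi\lambda}}\int_\Gamma e^{-|x-x_0|^2/(4\lambda)}\,ds$ ($ds$ arc length) and $\mathrm{Ent}[\Gamma]=\sup_{x_0\in\mathbb{R}^2,\lambda>0}F_{x_0,\lambda}[\Gamma]$. *)

theory Defs
  imports "HOL-Analysis.Analysis"
begin

(* Gaussian-weighted length of a curve given by a C1 injective parametrisation gamma : R -> R^2; ds = |gamma'(t)| dt *)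
definition gauss_F :: "(real \<Rightarrow> real \<times> real) \<Rightarrow> real \<times> real \<Rightarrow> real \<Rightarrow> ennreal" where
  "gauss_F \<gamma> x0 l =
     (\<integral>\<^sup>+ t. ennreal (exp (- (norm (\<gamma> t - x0))\<^sup>2 / (4 * l)) * norm (vector_derivative \<gamma> (at t))
                       / sqrt (4 * pi * l)) \<partial>lborel)"

definition curve_Ent :: "(real \<Rightarrow> real \<times> real) \<Rightarrow> ennreal" where
  "curve_Ent \<gamma> = (SUP p \<in> UNIV \<times> {0<..}. gauss_F \<gamma> (fst p) (snd p))"

definition log_spiral :: "real \<Rightarrow> real \<Rightarrow> real \<Rightarrow> real \<times> real" where
  "log_spiral a k \<phi> = (a * exp (k * \<phi>) * cos \<phi>, a * exp (k * \<phi>) * sin \<phi>)"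

end

theory Submission imports Defs "HOL-Probability.Probability" begin

lemma subst_bound:
  fixes f :: "real \<Rightarrow> real" and K a :: real
  assumes K: "K > 0" and a: "a > 0" and fc: "continuous_on UNIV f" and fnn: "\<And>x. f x \<ge> 0"
  shows "(\<integral>\<^sup>+t. ennreal (f (a*exp(K*t)) * (K*a*exp(K*t))) \<partial>lborel) \<le> (\<integral>\<^sup>+r. ennreal (f r) \<partial>lborel)"
proof -
  define g where "g t = a*exp(K*t)" for t
  define g' where "g' t = K*a*exp(K*t)" for t
  have fm[measurable]: "f \<in> borel_measurable borel" using fc by (intro borel_measurable_continuous_onI) simp
  have gm[measurable]: "g \<in> borel_measurable borel" unfolding g_def by measurable
  have g'm[measurable]: "g' \<in> borel_measurable borel" unfolding g'_def by measurable
  define F where "F n t = ennreal (f (g t) * g' t * indicator {-real n..real n} t)" for n t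
  have inc: "incseq F"
    unfolding F_def incseq_def le_fun_def
    by (auto intro!: ennreal_leI mult_left_mono simp: indicator_def g'_def fnn)
  have sup: "(SUP n. F n t) = ennreal (f (g t) * g' t)" for t
  proof -
    obtain N :: nat where N: "\<bar>t\<bar> \<le> real N" using real_arch_simple by blast
    have "F n t = ennreal (f (g t) * g' t)" if "n \<ge> N" for n
      using N that unfolding F_def by (auto simp: indicator_def)
    hence ev: "eventually (\<lambda>n. F n t = ennreal (f (g t) * g' t)) sequentially"
      by (auto simp: eventually_sequentially)
    have "(\<lambda>n. F n t) \<longlonglongrightarrow> ennreal (f (g t) * g' t)"
      by (rule tendsto_eventually[OF ev])
    moreover have "incseq (\<lambda>n. F n t)" using inc by (auto simp: incseq_def le_fun_def)
    ultimately show ?thesis using LIMSEQ_unique LIMSEQ_SUP by blast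
  qed
  have "(\<integral>\<^sup>+t. ennreal (f (a*exp(K*t)) * (K*a*exp(K*t))) \<partial>lborel) = (\<integral>\<^sup>+t. (SUP n. F n t) \<partial>lborel)"
    by (simp add: sup g_def g'_def)
  also have "\<dots> = (SUP n. integral\<^sup>N lborel (F n))"
    by (rule nn_integral_monotone_convergence_SUP[OF inc]) (unfold F_def, measurable)
  also have "\<dots> \<le> (\<integral>\<^sup>+r. ennreal (f r) \<partial>lborel)"
  proof (rule SUP_least)
    fix n
    have "integral\<^sup>N lborel (F n) = (\<integral>\<^sup>+x. f x * indicator {g (-real n)..g (real n)} x \<partial>lborel)"
      unfolding F_def
      by (rule nn_integral_substitution[symmetric])
         (auto simp: g_def g'_def set_borel_measurable_def K a less_imp_le intro!: derivative_eq_intros continuous_intros)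
    also have "\<dots> \<le> (\<integral>\<^sup>+r. ennreal (f r) \<partial>lborel)"
      by (intro nn_integral_mono) (auto simp: indicator_def fnn)
    finally show "integral\<^sup>N lborel (F n) \<le> (\<integral>\<^sup>+r. ennreal (f r) \<partial>lborel)" .
  qed
  finally show ?thesis .
qed


lemma spiral_deriv:
  "vector_derivative (log_spiral a k) (at t) =
     (a*exp(k*t)*(k * cos t - sin t), a*exp(k*t)*(k * sin t + cos t))"
proof -
  have "(log_spiral a k has_vector_derivative
     (a*exp(k*t)*(k * cos t - sin t), a*exp(k*t)*(k * sin t + cos t))) (at t)"
    unfolding log_spiral_def[abs_def]
    by (intro has_vector_derivative_Pair)
       (auto intro!: derivative_eq_intros simp: has_real_derivative_iff_has_vector_derivative[symmetric] algebra_simps)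
  thus ?thesis by (rule vector_derivative_at)
qed

lemma spiral_deriv_norm:
  assumes "a > 0"
  shows "norm (vector_derivative (log_spiral a k) (at t)) = a*exp(k*t)* sqrt(1+k^2)"
proof -
  have "(a*exp(k*t)*(k * cos t - sin t))^2 + (a*exp(k*t)*(k * sin t + cos t))^2
        = (a*exp(k*t))^2 * (1+k^2) * ((sin t)^2 + (cos t)^2)"
    by algebra
  also have "\<dots> = (a*exp(k*t)* sqrt(1+k^2))^2"
    by (simp add: power_mult_distrib)
  finally show ?thesis using assms
    by (simp add: spiral_deriv norm_Pair)
qed

lemma spiral_norm:
  assumes "a > 0"
  shows "norm (log_spiral a k t) = a*exp(k*t)"
proof -
  have "(a*exp(k*t)*cos t)^2 + (a*exp(k*t)* sin t)^2 = (a*exp(k*t))^2 * ((sin t)^2 + (cos t)^2)"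
    by algebra
  thus ?thesis using assms by (simp add: log_spiral_def norm_Pair)
qed

lemma normal_total: assumes "s > 0" shows "(\<integral>\<^sup>+r. ennreal (normal_density c s r) \<partial>lborel) = 1"
proof -
  have "emeasure (density lborel (normal_density c s)) (space (density lborel (normal_density c s))) = 1"
    using prob_space_normal_density[OF assms] by (rule prob_space.emeasure_space_1)
  thus ?thesis by (simp add: emeasure_density)
qed

lemma unit_bound:
  fixes f :: "real \<Rightarrow> real"
  assumes k: "k \<noteq> 0" and a: "a > 0" and fc: "continuous_on UNIV f" and fnn: "\<And>x. f x \<ge> 0"
  shows "(\<integral>\<^sup>+t. ennreal (f (a*exp(k*t)) * (\<bar>k\<bar>*a*exp(k*t))) \<partial>lborel) \<le> (\<integral>\<^sup>+r. ennreal (f r) \<partial>lborel)"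
proof (cases "k > 0")
  case True
  thus ?thesis using subst_bound[OF True a fc fnn] by simp
next
  case False
  hence K: "-k > 0" using k by simp
  have fm[measurable]: "f \<in> borel_measurable borel" using fc by (intro borel_measurable_continuous_onI) simp
  have "(\<integral>\<^sup>+t. ennreal (f (a*exp(k*t)) * (\<bar>k\<bar>*a*exp(k*t))) \<partial>lborel)
     = ennreal \<bar>-1\<bar> * (\<integral>\<^sup>+t. ennreal (f (a*exp(k*(0 + -1*t))) * (\<bar>k\<bar>*a*exp(k*(0 + -1 * t)))) \<partial>lborel)"
    by (rule nn_integral_real_affine) auto
  also have "\<dots> = (\<integral>\<^sup>+t. ennreal (f (a*exp((-k)*t)) * ((-k)*a*exp((-k)*t))) \<partial>lborel)"
    using False by simp
  also have "\<dots> \<le> (\<integral>\<^sup>+r. ennreal (f r) \<partial>lborel)"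
    by (rule subst_bound[OF K a fc fnn])
  finally show ?thesis .
qed

lemma gauss_bound:
  assumes a: "a > 0" and k: "k \<noteq> 0" and l: "l > 0"
  shows "gauss_F (log_spiral a k) x0 l \<le> ennreal (sqrt (1+k^2) / \<bar>k\<bar>)"
proof -
  define c where "c = norm x0"
  define s where "s = sqrt (2*l)"
  define f where "f = normal_density c s"
  define C where "C = sqrt (1+k^2) / \<bar>k\<bar>"
  have s2: "s^2 = 2*l" using l by (simp add: s_def)
  have sp: "s > 0" using l by (simp add: s_def)
  have fnn: "f x \<ge> 0" for x unfolding f_def using sp by (simp add: normal_density_nonneg)
  have fc: "continuous_on UNIV f" unfolding f_def normal_density_def using sp by (intro continuous_intros) auto
  have Cnn: "C \<ge> 0" by (simp add: C_def)
  have pt: "exp (- (norm (log_spiral a k t - x0))\<^sup>2 / (4 * l)) * norm (vector_derivative (log_spiral a k) (at t))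
                       / sqrt (4 * pi * l) \<le> C * (f (a*exp(k*t)) * (\<bar>k\<bar>*a*exp(k*t)))" for t
  proof -
    let ?r = "a*exp(k*t)"
    have "\<bar>?r - c\<bar> \<le> norm (log_spiral a k t - x0)"
      using norm_triangle_ineq3[of "log_spiral a k t" x0] by (simp add: spiral_norm[OF a] c_def)
    hence "(?r - c)^2 \<le> (norm (log_spiral a k t - x0))^2"
      by (metis abs_ge_zero power2_abs power_mono)
    hence e: "exp (- (norm (log_spiral a k t - x0))\<^sup>2 / (4 * l)) \<le> exp (- ((?r - c)^2) / (4*l))"
      using l by (simp add: divide_right_mono)
    have "C * (f ?r * (\<bar>k\<bar>*?r)) = exp (- ((?r - c)^2) / (4*l)) * (?r * sqrt(1+k^2)) / sqrt (4*pi*l)"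
      using k unfolding C_def f_def normal_density_def s2 by (simp add: field_simps)
    moreover have "exp (- (norm (log_spiral a k t - x0))\<^sup>2 / (4 * l)) * (?r * sqrt(1+k^2)) / sqrt (4*pi*l)
        \<le> exp (- ((?r - c)^2) / (4*l)) * (?r * sqrt(1+k^2)) / sqrt (4*pi*l)"
      using e a l by (intro divide_right_mono mult_right_mono) auto
    ultimately show ?thesis by (simp add: spiral_deriv_norm[OF a])
  qed
  have "gauss_F (log_spiral a k) x0 l \<le> (\<integral>\<^sup>+t. ennreal C * ennreal (f (a*exp(k*t)) * (\<bar>k\<bar>*a*exp(k*t))) \<partial>lborel)"
    unfolding gauss_F_def
    proof (intro nn_integral_mono)
    fix t
    have "ennreal C * ennreal (f (a*exp(k*t)) * (\<bar>k\<bar>*a*exp(k*t))) = ennreal (C * (f (a*exp(k*t)) * (\<bar>k\<bar>*a*exp(k*t))))"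
      using Cnn fnn a by (subst ennreal_mult) auto
    thus "ennreal (exp (- (norm (log_spiral a k t - x0))\<^sup>2 / (4 * l)) * norm (vector_derivative (log_spiral a k) (at t))
                       / sqrt (4 * pi * l)) \<le> ennreal C * ennreal (f (a*exp(k*t)) * (\<bar>k\<bar>*a*exp(k*t)))"
      using pt[of t] by (simp add: ennreal_leI)
  qed
  also have "\<dots> = ennreal C * (\<integral>\<^sup>+t. ennreal (f (a*exp(k*t)) * (\<bar>k\<bar>*a*exp(k*t))) \<partial>lborel)"
  proof (intro nn_integral_cmult)
    have [measurable]: "f \<in> borel_measurable borel" using fc by (intro borel_measurable_continuous_onI) simp
    show "(\<lambda>t. ennreal (f (a*exp(k*t)) * (\<bar>k\<bar>*a*exp(k*t)))) \<in> borel_measurable lborel" by measurable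
  qed
  also have "\<dots> \<le> ennreal C * (\<integral>\<^sup>+r. ennreal (f r) \<partial>lborel)"
    by (intro mult_left_mono unit_bound[OF k a fc fnn]) auto
  also have "\<dots> = ennreal C" unfolding f_def normal_total[OF sp] by simp
  finally show ?thesis unfolding C_def .
qed

theorem propositionA1:
  fixes a k :: real
  assumes "a > 0" and "k \<noteq> 0"
  shows "curve_Ent (log_spiral a k) \<le> ennreal (1 / \<bar>sin (arctan k)\<bar>)
         \<and> curve_Ent (log_spiral a k) < \<infinity>"
proof -
  have eq: "1 / \<bar>sin (arctan k)\<bar> = sqrt (1+k^2) / \<bar>k\<bar>"
    by (simp add: sin_arctan)
  have le: "curve_Ent (log_spiral a k) \<le> ennreal (sqrt (1+k^2) / \<bar>k\<bar>)"
    unfolding curve_Ent_def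
    by (rule SUP_least) (auto intro!: gauss_bound assms)
  show ?thesis using le by (simp add: eq) (metis ennreal_less_top order.strict_trans1)
qed
end
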